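(* Let $E_1,E_2$ be operator spaces of common finite dimension $k$, with bases $(e^1_1,\dots,e^1_k)$ of $E_1$ and $(e^2_1,\dots,e^2_k)$ of $E_2$ that are completely $1$-unconditional: for every $\varepsilon=(\varepsilon_1,\dots,\varepsilon_k)\in\{-1,1\}^k$, the maps $V^1_\varepsilon\colon E_1\to E_1$, $V^1_\varepsilon(e^1_i)=\varepsilon_ie^1_i$, and $V^2_\varepsilon\colon E_2\to E_2$, $V^2_\varepsilon(e^2_i)=\varepsilon_ie^2_i$, are complete contractions. Let $\Delta\colon E_1\otimes_hE_2\to E_1\otimes_hE_2$ be defined by $\Delta(e^1_i\otimes e^2_j)=0$ if $i\neq j$ and $\Delta(e^1_i\otimes e^2_i)=e^1_i\otimes e^2_i$. Then $\Delta$ is a complete contraction.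
   Context: $\otimes_h$ denotes the Haagerup tensor product of operator spaces. *)

theory Defs
  imports Complex_Main
begin

text \<open>Concrete model of finite-dimensional (abstract, Ruan) operator spaces with a fixed basis.
An element of the n x p matrix space over a space with basis indexed by B is a function
x r c b (row r, column c, coefficient of basis vector b), zero outside the range.\<close>

type_synonym 'b emat = "nat \<Rightarrow> nat \<Rightarrow> 'b \<Rightarrow> complex"
type_synonym cmat = "nat \<Rightarrow> nat \<Rightarrow> complex"

definition mats :: "nat \<Rightarrow> nat \<Rightarrow> 'b set \<Rightarrow> 'b emat set" where
  "mats n p B = {x. \<forall>r c b. x r c b \<noteq> 0 \<longrightarrow> r < n \<and> c < p \<and> b \<in> B}"

definition smats :: "nat \<Rightarrow> nat \<Rightarrow> cmat set" where
  "smats n p = {a. \<forall>r c. a r c \<noteq> 0 \<longrightarrow> r < n \<and> c < p}"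

definition vnorm :: "nat \<Rightarrow> (nat \<Rightarrow> complex) \<Rightarrow> real" where
  "vnorm n v = sqrt (\<Sum>j<n. (cmod (v j))^2)"

definition opnorm :: "nat \<Rightarrow> nat \<Rightarrow> cmat \<Rightarrow> real" where
  "opnorm n p a = Sup {vnorm n (\<lambda>r. \<Sum>c<p. a r c * v c) | v. vnorm p v \<le> 1}"

definition mmul :: "nat \<Rightarrow> nat \<Rightarrow> cmat \<Rightarrow> 'b emat \<Rightarrow> cmat \<Rightarrow> 'b emat" where
  "mmul n p \<alpha> x \<beta> = (\<lambda>r c b. \<Sum>s<n. \<Sum>t<p. \<alpha> r s * x s t b * \<beta> t c)"

definition dsum :: "nat \<Rightarrow> 'b emat \<Rightarrow> 'b emat \<Rightarrow> 'b emat" where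
  "dsum n x y = (\<lambda>r c b. if r < n \<and> c < n then x r c b
                          else if n \<le> r \<and> n \<le> c then y (r - n) (c - n) b else 0)"

text \<open>N n is the norm on M_n(E); Ruan's axioms.\<close>
definition opspace :: "(nat \<Rightarrow> 'b emat \<Rightarrow> real) \<Rightarrow> 'b set \<Rightarrow> bool" where
  "opspace N B \<longleftrightarrow> finite B \<and>
     (\<forall>n. \<forall>x\<in>mats n n B. 0 \<le> N n x \<and> (N n x = 0 \<longleftrightarrow> x = (\<lambda>_ _ _. 0))) \<and>
     (\<forall>n. \<forall>x\<in>mats n n B. \<forall>y\<in>mats n n B. N n (\<lambda>r c b. x r c b + y r c b) \<le> N n x + N n y) \<and>
     (\<forall>n a. \<forall>x\<in>mats n n B. N n (\<lambda>r c b. a * x r c b) = cmod a * N n x) \<and>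
     (\<forall>m n \<alpha> x \<beta>. \<alpha> \<in> smats m n \<longrightarrow> x \<in> mats n n B \<longrightarrow> \<beta> \<in> smats n m \<longrightarrow>
        N m (mmul n n \<alpha> x \<beta>) \<le> opnorm m n \<alpha> * N n x * opnorm n m \<beta>) \<and>
     (\<forall>n m x y. x \<in> mats n n B \<longrightarrow> y \<in> mats m m B \<longrightarrow>
        N (n + m) (dsum n x y) = max (N n x) (N m y))"

definition ampl :: "(('b \<Rightarrow> complex) \<Rightarrow> ('c \<Rightarrow> complex)) \<Rightarrow> 'b emat \<Rightarrow> 'c emat" where
  "ampl T x = (\<lambda>r c. T (x r c))"

definition completely_contractive ::
  "(nat \<Rightarrow> 'b emat \<Rightarrow> real) \<Rightarrow> (nat \<Rightarrow> 'c emat \<Rightarrow> real) \<Rightarrow> 'b set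
     \<Rightarrow> (('b \<Rightarrow> complex) \<Rightarrow> ('c \<Rightarrow> complex)) \<Rightarrow> bool" where
  "completely_contractive N M B T \<longleftrightarrow> (\<forall>n. \<forall>x\<in>mats n n B. M n (ampl T x) \<le> N n x)"

definition compl_1_uncond :: "(nat \<Rightarrow> nat emat \<Rightarrow> real) \<Rightarrow> nat \<Rightarrow> bool" where
  "compl_1_uncond N k \<longleftrightarrow> (\<forall>\<epsilon> :: nat \<Rightarrow> real. (\<forall>i<k. \<epsilon> i \<in> {-1, 1}) \<longrightarrow>
      completely_contractive N N {..<k} (\<lambda>v i. complex_of_real (\<epsilon> i) * v i))"

text \<open>x (n x p over E1) tensor-multiplied with y (p x q over E2), basis of E1 (x) E2 is
 e_i (x) e_j indexed by (i,j).\<close>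
definition htens :: "nat \<Rightarrow> nat emat \<Rightarrow> nat emat \<Rightarrow> (nat \<times> nat) emat" where
  "htens p x y = (\<lambda>r c ij. \<Sum>s<p. x r s (fst ij) * y s c (snd ij))"

text \<open>Haagerup norm on M_n(E1 (x)_h E2); rectangular norms are the norms of the zero-padded
square matrices.\<close>
definition hnorm :: "(nat \<Rightarrow> nat emat \<Rightarrow> real) \<Rightarrow> (nat \<Rightarrow> nat emat \<Rightarrow> real) \<Rightarrow> nat
     \<Rightarrow> nat \<Rightarrow> (nat \<times> nat) emat \<Rightarrow> real" where
  "hnorm N1 N2 k n u = Inf {N1 (max n p) x * N2 (max p n) y | p x y.
      x \<in> mats n p {..<k} \<and> y \<in> mats p n {..<k} \<and> u = htens p x y}"

definition diagproj :: "((nat \<times> nat) \<Rightarrow> complex) \<Rightarrow> ((nat \<times> nat) \<Rightarrow> complex)" where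
  "diagproj v = (\<lambda>ij. if fst ij = snd ij then v ij else 0)"

end

theory Submission
  imports Defs "HOL-Analysis.Analysis"
begin


lemma sum_split: fixes f :: "nat \<Rightarrow> 'a::comm_monoid_add" shows "(\<Sum>s<M*q. f s) = (\<Sum>m<M. \<Sum>t<q. f (m*q+t))"
proof -
  have "(\<Sum>s<M*q. f s) = (\<Sum>m<M. sum f {m*q..<m*q+q})"
    using sum.nat_group[of f q M] by simp
  also have "\<dots> = (\<Sum>m<M. \<Sum>t<q. f (m*q+t))"
  proof (rule sum.cong[OF refl])
    fix m show "sum f {m*q..<m*q+q} = (\<Sum>t<q. f (m*q+t))"
      using sum.shift_bounds_nat_ivl[of f 0 "m*q" q] by (simp add: lessThan_atLeast0 add.commute)
  qed
  finally show ?thesis .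
qed

lemma wCS:
  fixes w b :: "'a \<Rightarrow> real"
  assumes "\<And>i. i \<in> I \<Longrightarrow> 0 \<le> w i"
  shows "(\<Sum>i\<in>I. w i * b i)\<^sup>2 \<le> (\<Sum>i\<in>I. w i) * (\<Sum>i\<in>I. w i * (b i)\<^sup>2)"
proof -
  have "(\<Sum>i\<in>I. w i * b i) = (\<Sum>i\<in>I. sqrt (w i) * (sqrt (w i) * b i))"
    by (rule sum.cong) (use assms in \<open>auto simp: real_sqrt_mult_self mult.assoc[symmetric]\<close>)
  moreover have "(\<Sum>i\<in>I. w i) = (\<Sum>i\<in>I. (sqrt (w i))\<^sup>2)" 
    by (rule sum.cong) (use assms in auto)
  moreover have "(\<Sum>i\<in>I. w i * (b i)\<^sup>2) = (\<Sum>i\<in>I. (sqrt (w i) * b i)\<^sup>2)"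
    by (rule sum.cong) (use assms in \<open>auto simp: power_mult_distrib\<close>)
  ultimately show ?thesis using Cauchy_Schwarz_ineq_sum[of "\<lambda>i. sqrt (w i)" "\<lambda>i. sqrt (w i) * b i" I]
    by simp
qed

lemma schur_pt:
  assumes R: "\<And>r. r<n \<Longrightarrow> (\<Sum>c<p. cmod (a r c)) \<le> R"
    and C: "\<And>c. c<p \<Longrightarrow> (\<Sum>r<n. cmod (a r c)) \<le> C" and R0: "0 \<le> R" and C0: "0 \<le> C"
    and v: "vnorm p v \<le> 1"
  shows "vnorm n (\<lambda>r. \<Sum>c<p. a r c * v c) \<le> sqrt (R*C)"
proof -
  have v1: "(\<Sum>c<p. (cmod (v c))^2) \<le> 1" using v unfolding vnorm_def
    by simp
  have row: "(cmod (\<Sum>c<p. a r c * v c))^2 \<le> R * (\<Sum>c<p. cmod (a r c) * (cmod (v c))^2)" if "r<n" for r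
  proof -
    have "cmod (\<Sum>c<p. a r c * v c) \<le> (\<Sum>c<p. cmod (a r c) * cmod (v c))"
      using norm_sum[of "\<lambda>c. a r c * v c" "{..<p}"] by (simp add: norm_mult)
    hence "(cmod (\<Sum>c<p. a r c * v c))^2 \<le> (\<Sum>c<p. cmod (a r c) * cmod (v c))^2"
      by (simp add: power_mono)
    also have "\<dots> \<le> (\<Sum>c<p. cmod (a r c)) * (\<Sum>c<p. cmod (a r c) * (cmod (v c))^2)"
      by (rule wCS) simp
    also have "\<dots> \<le> R * (\<Sum>c<p. cmod (a r c) * (cmod (v c))^2)"
      by (rule mult_right_mono[OF R[OF that]]) (simp add: sum_nonneg)
    finally show ?thesis .
  qed
  have "(\<Sum>r<n. (cmod (\<Sum>c<p. a r c * v c))^2) \<le> (\<Sum>r<n. R * (\<Sum>c<p. cmod (a r c) * (cmod (v c))^2))"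
    by (rule sum_mono) (use row in auto)
  also have "\<dots> = R * (\<Sum>c<p. (\<Sum>r<n. cmod (a r c)) * (cmod (v c))^2)"
    unfolding sum_distrib_left sum_distrib_right by (subst sum.swap) (simp add: mult.assoc)
  also have "\<dots> \<le> R * (\<Sum>c<p. C * (cmod (v c))^2)"
    by (rule mult_left_mono[OF sum_mono[OF mult_right_mono[OF C]]]) (use R0 in auto)
  also have "\<dots> = R * C * (\<Sum>c<p. (cmod (v c))^2)" by (simp add: sum_distrib_left mult.assoc)
  also have "\<dots> \<le> R * C" using v1 R0 C0 by (simp add: mult_left_le)
  finally show ?thesis unfolding vnorm_def by (simp add: real_sqrt_le_mono)
qed

lemma schur:
  assumes R: "\<And>r. r<n \<Longrightarrow> (\<Sum>c<p. cmod (a r c)) \<le> R"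
    and C: "\<And>c. c<p \<Longrightarrow> (\<Sum>r<n. cmod (a r c)) \<le> C" and R0: "0 \<le> R" and C0: "0 \<le> C"
  shows "opnorm n p a \<le> sqrt (R*C) \<and> 0 \<le> opnorm n p a"
proof -
  define T where "T = {vnorm n (\<lambda>r. \<Sum>c<p. a r c * v c) | v. vnorm p v \<le> 1}"
  have z: "vnorm p (\<lambda>_. 0) \<le> 1" "vnorm n (\<lambda>r. \<Sum>c<p. a r c * 0) = 0" by (simp_all add: vnorm_def)
  have ne: "0 \<in> T" unfolding T_def
  proof (rule CollectI, rule exI[of _ "\<lambda>_. 0"])
    show "0 = vnorm n (\<lambda>r. \<Sum>c<p. a r c * 0) \<and> vnorm p (\<lambda>_. 0) \<le> 1" using z by simp
  qed
  have ub: "t \<le> sqrt (R*C)" if "t \<in> T" for t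
  proof -
    from that obtain v where "t = vnorm n (\<lambda>r. \<Sum>c<p. a r c * v c)" "vnorm p v \<le> 1"
      unfolding T_def by blast
    thus ?thesis using schur_pt[OF R C R0 C0] by simp
  qed
  have "Sup T \<le> sqrt (R*C)"
    by (rule cSup_least) (use ne ub in auto)
  moreover have "0 \<le> Sup T"
    by (rule cSup_upper[OF ne], rule bdd_aboveI[of _ "sqrt(R*C)"], rule ub)
  ultimately show ?thesis unfolding opnorm_def T_def by blast
qed

lemma os_fin: "opspace N B \<Longrightarrow> finite B" unfolding opspace_def by (elim conjE)
lemma os_nonneg: "opspace N B \<Longrightarrow> x \<in> mats n n B \<Longrightarrow> 0 \<le> N n x"
  unfolding opspace_def by (elim conjE) (drule spec[of _ n], drule bspec, assumption, elim conjE)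
lemma os_zero: "opspace N B \<Longrightarrow> N n (\<lambda>_ _ _. 0) = 0"
proof -
  assume a: "opspace N B"
  have "(\<lambda>_ _ _. 0) \<in> mats n n B" unfolding mats_def by simp
  with a show ?thesis unfolding opspace_def by (elim conjE) (drule spec[of _ n], drule bspec, assumption, simp)
qed
lemma os_scale: "opspace N B \<Longrightarrow> x \<in> mats n n B \<Longrightarrow> N n (\<lambda>r c b. a * x r c b) = cmod a * N n x"
  unfolding opspace_def by (elim conjE) (drule spec[of _ n], drule spec[of _ a], drule bspec, assumption, assumption)
lemma os_mmul: "opspace N B \<Longrightarrow> \<alpha> \<in> smats m n \<Longrightarrow> x \<in> mats n n B \<Longrightarrow> \<beta> \<in> smats n m \<Longrightarrow>
        N m (mmul n n \<alpha> x \<beta>) \<le> opnorm m n \<alpha> * N n x * opnorm n m \<beta>"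
  unfolding opspace_def by (elim conjE) (drule spec[of _ m], drule spec[of _ n], drule spec[of _ \<alpha>], drule spec[of _ x], drule spec[of _ \<beta>], blast)
lemma os_dsum: "opspace N B \<Longrightarrow> x \<in> mats n n B \<Longrightarrow> y \<in> mats m m B \<Longrightarrow>
        N (n + m) (Defs.dsum n x y) = max (N n x) (N m y)"
  unfolding opspace_def by (elim conjE) (drule spec[of _ n], drule spec[of _ m], drule spec[of _ x], drule spec[of _ y], blast)
definition bd :: "nat \<Rightarrow> (nat \<Rightarrow> 'b emat) \<Rightarrow> nat \<Rightarrow> 'b emat" where
 "bd q z M = (\<lambda>s t b. if s < M*q \<and> t < M*q \<and> s div q = t div q then z (s div q) (s mod q) (t mod q) b else 0)"

lemma divlt: "0 < (q::nat) \<Longrightarrow> s < M*q \<Longrightarrow> s div q < M"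
  by (simp add: less_mult_imp_div_less)
lemma divM: "0 < (q::nat) \<Longrightarrow> M*q \<le> s \<Longrightarrow> s < M*q + q \<Longrightarrow> s div q = M \<and> s mod q = s - M*q"
proof -
  assume a: "0 < q" "M*q \<le> s" "s < M*q + q"
  have d: "s div q = M" by (rule div_nat_eqI) (use a in \<open>simp_all add: mult.commute\<close>)
  moreover have "s mod q = s - s div q * q" by (simp add: minus_div_mult_eq_mod[symmetric])
  ultimately show ?thesis by simp
qed
lemma divge: "0 < (q::nat) \<Longrightarrow> M*q \<le> s \<Longrightarrow> M \<le> s div q"
  using div_le_mono[of "M*q" s q] by simp

lemma bd_mats: assumes "\<And>m. m<M \<Longrightarrow> z m \<in> mats q q B" "0 < q"
  shows "bd q z M \<in> mats (M*q) (M*q) B"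
  unfolding mats_def
proof (intro CollectI allI impI)
  fix r c b assume nz: "bd q z M r c b \<noteq> 0"
  hence h: "r < M*q" "c < M*q" "r div q = c div q" and z0: "z (r div q) (r mod q) (c mod q) b \<noteq> 0"
    unfolding bd_def by (auto split: if_splits)
  have "r div q < M" using divlt[OF assms(2) h(1)] .
  hence "z (r div q) \<in> mats q q B" using assms(1) by blast
  hence "b \<in> B" using z0 unfolding mats_def by blast
  thus "r < M * q \<and> c < M * q \<and> b \<in> B" using h by blast
qed

lemma bd_Suc: assumes "z M \<in> mats q q B" "0 < q"
  shows "bd q z (Suc M) = Defs.dsum (M*q) (bd q z M) (z M)"
proof (intro ext)
  fix s t b
  show "bd q z (Suc M) s t b = Defs.dsum (M*q) (bd q z M) (z M) s t b"
  proof (cases "s < M*q \<and> t < M*q")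
    case True
    hence "s < Suc M * q" "t < Suc M * q" by auto
    thus ?thesis using True by (simp add: bd_def Defs.dsum_def)
  next
    case F: False
    show ?thesis
    proof (cases "M*q \<le> s \<and> M*q \<le> t")
      case True
      show ?thesis
      proof (cases "s < M*q+q \<and> t < M*q+q")
        case True
        with \<open>M*q \<le> s \<and> M*q \<le> t\<close> divM[OF assms(2)] show ?thesis unfolding bd_def Defs.dsum_def by auto
      next
        case False
        hence "\<not> (s - M*q < q \<and> t - M*q < q)" using True by auto
        hence "z M (s - M*q) (t - M*q) b = 0" using assms(1) unfolding mats_def by blast
        moreover have "\<not> (s < Suc M*q \<and> t < Suc M * q)" using False True by auto
    ultimately show ?thesis using False True by (auto simp: bd_def Defs.dsum_def)
      qed
    next
      case False
      have "s div q \<noteq> t div q"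
      proof (cases "s < M*q")
        case True
        hence "M*q \<le> t" using F by auto
        thus ?thesis using divlt[OF assms(2) True] divge[OF assms(2)] by (metis leD)
      next
        case c: False
        hence "t < M*q" using False by auto
        thus ?thesis using c divlt[OF assms(2)] divge[OF assms(2)] by (metis leD linorder_not_le)
      qed
      thus ?thesis using F False by (auto simp: bd_def Defs.dsum_def)
    qed
  qed
qed

lemma bd_norm: assumes os: "opspace N B" and q: "0 < q" and z: "\<And>m. m<M \<Longrightarrow> z m \<in> mats q q B"
  and zn: "\<And>m. m<M \<Longrightarrow> N q (z m) \<le> a" and a: "0 \<le> a"
  shows "N (M*q) (bd q z M) \<le> a"
  using z zn
proof (induction M)
  case 0
  have "bd q z 0 = (\<lambda>_ _ _. 0)" unfolding bd_def by auto
  moreover have "(\<lambda>_ _ _. 0) \<in> mats 0 0 B" unfolding mats_def by auto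
  moreover have "N 0 (\<lambda>_ _ _. 0) = 0" using os_zero[OF os] .
  ultimately show ?case using a by simp
next
  case (Suc M)
  have m1: "bd q z M \<in> mats (M*q) (M*q) B" by (rule bd_mats) (use Suc q in auto)
  have m2: "z M \<in> mats q q B" using Suc by auto
  have "N (Suc M * q) (bd q z (Suc M)) = N (M*q + q) (Defs.dsum (M*q) (bd q z M) (z M))"
    using bd_Suc[of z M q B, OF m2 q] by (simp add: add.commute)
  also have "\<dots> = max (N (M*q) (bd q z M)) (N q (z M))"
    using os_dsum[OF os m1 m2] .
  also have "\<dots> \<le> a"
  proof -
    have "N (M*q) (bd q z M) \<le> a" by (rule Suc.IH) (use Suc.prems in auto)
    thus ?thesis using Suc.prems(2)[of M] by simp
  qed
  finally show ?case .
qed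

lemma signs: fixes k :: nat shows "\<exists>M g. 0 < M \<and> (\<forall>m i. m<M \<longrightarrow> i<k \<longrightarrow> g m i \<in> {-1,1::real}) \<and>
  (\<forall>i j. i<k \<longrightarrow> j<k \<longrightarrow> (\<Sum>m<M. g m i * g m j) = (if i = j then real M else 0))"
proof -
  define S where "S = PiE {..<k} (\<lambda>_. {-1,1::real})"
  have fin: "finite S" unfolding S_def by (simp add: finite_PiE)
  have ne: "S \<noteq> {}" unfolding S_def by (simp add: PiE_eq_empty_iff)
  obtain h where h: "bij_betw h {0..<card S} S" using ex_bij_betw_nat_finite[OF fin] by blast
  have hS: "h m \<in> S" if "m < card S" for m using h that unfolding bij_betw_def by auto
  have sumS: "(\<Sum>m<card S. \<phi> (h m)) = (\<Sum>e\<in>S. \<phi> e)" for \<phi> :: "(nat \<Rightarrow> real) \<Rightarrow> real"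
    using sum.reindex_bij_betw[OF h, of \<phi>] by (simp add: atLeast0LessThan)
  have pm: "e i \<in> {-1,1}" if "e \<in> S" "i < k" for e i using that unfolding S_def by auto
  have orth: "(\<Sum>e\<in>S. e i * e j) = (if i = j then real (card S) else 0)" if ij: "i<k" "j<k" for i j
  proof (cases "i = j")
    case True
    have "(\<Sum>e\<in>S. e i * e j) = (\<Sum>e\<in>S. 1)"
    proof (rule sum.cong[OF refl])
      fix e assume "e \<in> S"
      hence "e i = -1 \<or> e i = 1" using pm[OF _ ij(1)] by blast
      thus "e i * e j = 1" using True by auto
    qed
    thus ?thesis using True by simp
  next
    case False
    define f where "f e = e(i := - e i)" for e :: "nat \<Rightarrow> real"
    have fS: "f e \<in> S" if "e \<in> S" for e using that ij unfolding S_def f_def PiE_def extensional_def Pi_def by auto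
    have ff: "f (f e) = e" for e unfolding f_def by auto
    have bij: "bij_betw f S S" by (rule bij_betwI[of f S S f]) (use fS ff in auto)
    have "(\<Sum>e\<in>S. e i * e j) = (\<Sum>e\<in>S. f e i * f e j)"
      using sum.reindex_bij_betw[OF bij, of "\<lambda>e. e i * e j"] by simp
    also have "\<dots> = - (\<Sum>e\<in>S. e i * e j)"
      using False by (simp add: f_def sum_negf)
    finally show ?thesis using False by simp
  qed
  have "0 < card S" using fin ne by (simp add: card_gt_0_iff)
  moreover have "\<forall>m i. m < card S \<longrightarrow> i < k \<longrightarrow> h m i \<in> {-1,1}" using pm hS by blast
  moreover have "\<forall>i j. i<k \<longrightarrow> j<k \<longrightarrow> (\<Sum>m<card S. h m i * h m j) = (if i = j then real (card S) else 0)"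
  proof (intro allI impI)
    fix i j assume "i < k" "j < k"
    thus "(\<Sum>m<card S. h m i * h m j) = (if i = j then real (card S) else 0)"
      using sumS[of "\<lambda>e. e i * e j"] orth[of i j] by simp
  qed
  ultimately show ?thesis by blast
qed

lemma mq: "(t::nat) < q \<Longrightarrow> (m*q+t) div q = m \<and> (m*q+t) mod q = t"
  using divM[of q m "m*q+t"] by simp

definition Iden :: "nat \<Rightarrow> cmat" where "Iden P = (\<lambda>t c. if t < P \<and> t = c then 1 else 0)"
definition alph :: "nat \<Rightarrow> nat \<Rightarrow> cmat" where
  "alph q P = (\<lambda>r s. if r < q \<and> s < P \<and> s mod q = r then 1 else 0)"
definition bet :: "nat \<Rightarrow> nat \<Rightarrow> cmat" where
  "bet q P = (\<lambda>t c. if c < q \<and> t < P \<and> t mod q = c then 1 else 0)"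

lemma sum_delta_if: "(t::nat) < P \<Longrightarrow> (\<Sum>s<P. if s = t then f s else 0) = f t"
  by (simp add: sum.delta)

lemma row_fact:
  assumes q: "0 < q" and z: "\<And>m. m<M \<Longrightarrow> z m \<in> mats q q B"
  shows "mmul (M*q) (M*q) (alph q (M*q)) (bd q z M) (Iden (M*q)) =
     (\<lambda>r c b. if r < q \<and> c < M*q then z (c div q) r (c mod q) b else 0)"
proof (intro ext)
  fix r c b
  let ?P = "M*q"
  have inner: "(\<Sum>t<?P. alph q ?P r s * bd q z M s t b * Iden ?P t c) =
      (if c < ?P then alph q ?P r s * bd q z M s c b else 0)" for s
    by (cases "c < ?P") (simp_all add: Iden_def if_distrib[of "\<lambda>x. _ * x"] sum.delta cong: if_cong)
  show "mmul ?P ?P (alph q ?P) (bd q z M) (Iden ?P) r c b =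
     (if r < q \<and> c < ?P then z (c div q) r (c mod q) b else 0)"
  proof (cases "r < q \<and> c < ?P")
    case True
    hence cd: "c div q < M" using divlt[OF q] by blast
    define t where "t = (c div q) * q + r"
    have tP: "t < ?P" unfolding t_def using mult_le_mono1[OF Suc_leI[OF cd], of q] True by simp
    have "(\<Sum>s<?P. alph q ?P r s * bd q z M s c b) = (\<Sum>s<?P. if s = t then z (c div q) r (c mod q) b else 0)"
    proof (rule sum.cong[OF refl])
      fix s assume s: "s \<in> {..<?P}"
      show "alph q ?P r s * bd q z M s c b = (if s = t then z (c div q) r (c mod q) b else 0)"
      proof (cases "s = t")
        case st: True
        have "s div q = c div q" "s mod q = r" using mq[of r q "c div q"] True st unfolding t_def by auto
        thus ?thesis using s True st by (simp add: alph_def bd_def)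
      next
        case False
        have "\<not> (s mod q = r \<and> s div q = c div q)"
        proof
          assume "s mod q = r \<and> s div q = c div q"
          hence "s = t" unfolding t_def by (metis div_mult_mod_eq)
          with False show False by simp
        qed
        thus ?thesis using False by (auto simp: alph_def bd_def)
      qed
    qed
    also have "\<dots> = z (c div q) r (c mod q) b" using sum_delta_if[OF tP] .
    finally show ?thesis using True unfolding mmul_def inner by simp
  next
    case False
    hence "(if c < ?P then alph q ?P r s * bd q z M s c b else 0) = 0" for s by (auto simp: alph_def)
    thus ?thesis using False unfolding mmul_def inner by auto
  qed
qed

lemma col_fact:
  assumes q: "0 < q" and z: "\<And>m. m<M \<Longrightarrow> z m \<in> mats q q B"
  shows "mmul (M*q) (M*q) (Iden (M*q)) (bd q z M) (bet q (M*q)) =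
     (\<lambda>s c b. if s < M*q \<and> c < q then z (s div q) (s mod q) c b else 0)"
proof (intro ext)
  fix s c b
  let ?P = "M*q"
  have inner: "(\<Sum>t<?P. Iden ?P s s' * bd q z M s' t b * bet q ?P t c) =
      Iden ?P s s' * (\<Sum>t<?P. bd q z M s' t b * bet q ?P t c)" for s'
    by (simp add: sum_distrib_left mult.assoc)
  have outer: "(\<Sum>s'<?P. Iden ?P s s' * (\<Sum>t<?P. bd q z M s' t b * bet q ?P t c)) =
     (if s < ?P then (\<Sum>t<?P. bd q z M s t b * bet q ?P t c) else 0)"
    by (cases "s < ?P") (simp_all add: Iden_def if_distrib[of "\<lambda>x. x * _"] sum.delta cong: if_cong)
  show "mmul ?P ?P (Iden ?P) (bd q z M) (bet q ?P) s c b =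
     (if s < ?P \<and> c < q then z (s div q) (s mod q) c b else 0)"
  proof (cases "s < ?P \<and> c < q")
    case True
    hence cd: "s div q < M" using divlt[OF q] by blast
    define t where "t = (s div q) * q + c"
    have tP: "t < ?P" unfolding t_def using mult_le_mono1[OF Suc_leI[OF cd], of q] True by simp
    have "(\<Sum>t'<?P. bd q z M s t' b * bet q ?P t' c) = (\<Sum>t'<?P. if t' = t then z (s div q) (s mod q) c b else 0)"
    proof (rule sum.cong[OF refl])
      fix t' assume t': "t' \<in> {..<?P}"
      show "bd q z M s t' b * bet q ?P t' c = (if t' = t then z (s div q) (s mod q) c b else 0)"
      proof (cases "t' = t")
        case st: True
        have "t' div q = s div q" "t' mod q = c" using mq[of c q "s div q"] True st unfolding t_def by auto
        thus ?thesis using t' True st by (simp add: bet_def bd_def)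
      next
        case False
        have "\<not> (t' mod q = c \<and> s div q = t' div q)"
        proof
          assume "t' mod q = c \<and> s div q = t' div q"
          hence "t' = t" unfolding t_def by (metis div_mult_mod_eq)
          with False show False by simp
        qed
        thus ?thesis using False by (auto simp: bet_def bd_def)
      qed
    qed
    also have "\<dots> = z (s div q) (s mod q) c b" using sum_delta_if[OF tP] .
    finally show ?thesis using True unfolding mmul_def inner outer by simp
  next
    case False
    hence "(if s < ?P then (\<Sum>t<?P. bd q z M s t b * bet q ?P t c) else 0) = 0"
      by (auto simp: bet_def)
    thus ?thesis using False unfolding mmul_def inner outer by auto
  qed
qed

lemma cmod_if: "cmod (if P then 1 else 0) = (if P then 1 else 0)" by simp

lemma sum_ind_le1: "(\<Sum>x<N. if x = (a::nat) \<and> Q then (1::real) else 0) \<le> 1"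
proof -
  have "(\<Sum>x<N. if x = (a::nat) \<and> Q then (1::real) else 0) = (\<Sum>x<N. if x = a then (if Q then 1 else 0) else 0)"
    by (rule sum.cong) auto
  also have "\<dots> \<le> 1" by (simp add: sum.delta)
  finally show ?thesis .
qed

lemma alph_norm: assumes "0 < q"
  shows "opnorm (M*q) (M*q) (alph q (M*q)) \<le> sqrt (real M) \<and> 0 \<le> opnorm (M*q) (M*q) (alph q (M*q))"
proof -
  have R: "(\<Sum>s<M*q. cmod (alph q (M*q) r s)) \<le> real M" for r
  proof -
    have "(\<Sum>s<M*q. cmod (alph q (M*q) r s)) = (\<Sum>m<M. \<Sum>t<q. cmod (alph q (M*q) r (m*q+t)))"
      by (rule sum_split)
    also have "\<dots> \<le> (\<Sum>m<M. 1)"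
    proof (rule sum_mono)
      fix m assume m: "m \<in> {..<M}"
      have "(\<Sum>t<q. cmod (alph q (M*q) r (m*q+t))) = (\<Sum>t<q. if t = r \<and> r < q then 1 else 0)"
      proof (rule sum.cong[OF refl])
        fix t assume "t \<in> {..<q}"
        hence "(m*q+t) mod q = t" "m*q+t < M*q" using mq[of t q m] m mult_le_mono1[of "Suc m" M q] by auto
        thus "cmod (alph q (M*q) r (m*q+t)) = (if t = r \<and> r < q then 1 else 0)"
          unfolding alph_def by auto
      qed
      also have "\<dots> \<le> 1" by (rule sum_ind_le1)
      finally show "(\<Sum>t<q. cmod (alph q (M*q) r (m*q+t))) \<le> 1" .
    qed
    finally show ?thesis by simp
  qed
  have C: "(\<Sum>r<M*q. cmod (alph q (M*q) r s)) \<le> 1" for s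
  proof -
    have "(\<Sum>r<M*q. cmod (alph q (M*q) r s)) = (\<Sum>r<M*q. if r = s mod q \<and> s < M*q then 1 else 0)"
      by (rule sum.cong) (use assms in \<open>auto simp: alph_def\<close>)
    also have "\<dots> \<le> 1" by (rule sum_ind_le1)
    finally show ?thesis .
  qed
  show ?thesis using schur[where n="M*q" and p="M*q" and a="alph q (M*q)" and R="real M" and C=1] R C by simp
qed

lemma bet_norm: assumes "0 < q"
  shows "opnorm (M*q) (M*q) (bet q (M*q)) \<le> sqrt (real M) \<and> 0 \<le> opnorm (M*q) (M*q) (bet q (M*q))"
proof -
  have C: "(\<Sum>s<M*q. cmod (bet q (M*q) s r)) \<le> real M" for r
  proof -
    have "(\<Sum>s<M*q. cmod (bet q (M*q) s r)) = (\<Sum>m<M. \<Sum>t<q. cmod (bet q (M*q) (m*q+t) r))"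
      by (rule sum_split)
    also have "\<dots> \<le> (\<Sum>m<M. 1)"
    proof (rule sum_mono)
      fix m assume m: "m \<in> {..<M}"
      have "(\<Sum>t<q. cmod (bet q (M*q) (m*q+t) r)) = (\<Sum>t<q. if t = r \<and> r < q then 1 else 0)"
      proof (rule sum.cong[OF refl])
        fix t assume "t \<in> {..<q}"
        hence "(m*q+t) mod q = t" "m*q+t < M*q" using mq[of t q m] m mult_le_mono1[of "Suc m" M q] by auto
        thus "cmod (bet q (M*q) (m*q+t) r) = (if t = r \<and> r < q then 1 else 0)"
          unfolding bet_def by auto
      qed
      also have "\<dots> \<le> 1" by (rule sum_ind_le1)
      finally show "(\<Sum>t<q. cmod (bet q (M*q) (m*q+t) r)) \<le> 1" .
    qed
    finally show ?thesis by simp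
  qed
  have R: "(\<Sum>r<M*q. cmod (bet q (M*q) s r)) \<le> 1" for s
  proof -
    have "(\<Sum>r<M*q. cmod (bet q (M*q) s r)) = (\<Sum>r<M*q. if r = s mod q \<and> s < M*q then 1 else 0)"
      by (rule sum.cong) (use assms in \<open>auto simp: bet_def\<close>)
    also have "\<dots> \<le> 1" by (rule sum_ind_le1)
    finally show ?thesis .
  qed
  show ?thesis using schur[where n="M*q" and p="M*q" and a="bet q (M*q)" and R=1 and C="real M"] R C by simp
qed

lemma Iden_norm: "opnorm P P (Iden P) \<le> 1 \<and> 0 \<le> opnorm P P (Iden P)"
proof -
  have R: "(\<Sum>c<P. cmod (Iden P r c)) \<le> 1" for r
  proof -
    have "(\<Sum>c<P. cmod (Iden P r c)) = (\<Sum>c<P. if c = r \<and> r < P then 1 else 0)"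
      by (rule sum.cong) (auto simp: Iden_def)
    also have "\<dots> \<le> 1" by (rule sum_ind_le1)
    finally show ?thesis .
  qed
  have C: "(\<Sum>r<P. cmod (Iden P r c)) \<le> 1" for c
  proof -
    have "(\<Sum>r<P. cmod (Iden P r c)) = (\<Sum>r<P. if r = c \<and> c < P then 1 else 0)"
      by (rule sum.cong) (auto simp: Iden_def)
    also have "\<dots> \<le> 1" by (rule sum_ind_le1)
    finally show ?thesis .
  qed
  show ?thesis using schur[where n=P and p=P and a="Iden P" and R=1 and C=1] R C by simp
qed

lemma smats_abi: "0 < M \<Longrightarrow> alph q (M*q) \<in> smats (M*q) (M*q) \<and> bet q (M*q) \<in> smats (M*q) (M*q) \<and> Iden P \<in> smats P P"
  unfolding smats_def alph_def bet_def Iden_def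
  using mult_le_mono1[of 1 M q] by (auto intro: le_less_trans[OF mod_less_eq_dividend])




lemma uncond_app: assumes "compl_1_uncond N k" "\<And>i. i<k \<Longrightarrow> g i \<in> {-1,1}" "x \<in> mats q q {..<k}"
  shows "N q (\<lambda>r t i. complex_of_real (g i) * x r t i) \<le> N q x"
proof -
  have "completely_contractive N N {..<k} (\<lambda>v i. complex_of_real (g i) * v i)"
    using assms(1,2) unfolding compl_1_uncond_def by blast
  thus ?thesis using assms(3) unfolding completely_contractive_def ampl_def by blast
qed

lemma key:
  assumes os1: "opspace N1 {..<k}" and os2: "opspace N2 {..<k}"
    and u1: "compl_1_uncond N1 k" and u2: "compl_1_uncond N2 k"
    and n: "0 < n" and x: "x \<in> mats n p {..<k}" and y: "y \<in> mats p n {..<k}"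
  shows "\<exists>P X Y. X \<in> mats n P {..<k} \<and> Y \<in> mats P n {..<k} \<and> ampl diagproj (htens p x y) = htens P X Y
     \<and> N1 (max n P) X \<le> N1 (max n p) x \<and> N2 (max P n) Y \<le> N2 (max p n) y"
proof -
  define q where "q = max n p"
  have q: "0 < q" "n \<le> q" "p \<le> q" using n unfolding q_def by auto
  obtain M :: nat and g :: "nat \<Rightarrow> nat \<Rightarrow> real" where M: "0 < M"
    and g0: "\<forall>m i. m<M \<longrightarrow> i<k \<longrightarrow> g m i \<in> {-1,1}"
    and go0: "\<forall>i j. i<k \<longrightarrow> j<k \<longrightarrow> (\<Sum>m<M. g m i * g m j) = (if i = j then real M else 0)"
    using signs[of k] by blast
  have g: "\<And>m i. m<M \<Longrightarrow> i<k \<Longrightarrow> g m i \<in> {-1,1}" using g0 by blast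
  have go: "\<And>i j. i<k \<Longrightarrow> j<k \<Longrightarrow> (\<Sum>m<M. g m i * g m j) = (if i = j then real M else 0)" using go0 by blast
  define P where "P = M*q"
  have qP: "q \<le> P" unfolding P_def using M by simp
  have xz: "x r t i = 0" if "\<not> (r < n \<and> t < p \<and> i < k)" for r t i using x that unfolding mats_def by blast
  have yz: "y t c j = 0" if "\<not> (t < p \<and> c < n \<and> j < k)" for t c j using y that unfolding mats_def by blast
  have xq: "x \<in> mats q q {..<k}" unfolding mats_def
  proof (intro CollectI allI impI)
    fix r t i assume "x r t i \<noteq> 0"
    hence "r < n \<and> t < p \<and> i < k" using xz by blast
    thus "r < q \<and> t < q \<and> i \<in> {..<k}" using q by auto
  qed
  have yq: "y \<in> mats q q {..<k}" unfolding mats_def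
  proof (intro CollectI allI impI)
    fix r t i assume "y r t i \<noteq> 0"
    hence "r < p \<and> t < n \<and> i < k" using yz by blast
    thus "r < q \<and> t < q \<and> i \<in> {..<k}" using q by auto
  qed
  define zx where "zx m = (\<lambda>r t i. complex_of_real (g m i) * x r t i)" for m
  define zy where "zy m = (\<lambda>r t i. complex_of_real (g m i) * y r t i)" for m
  have zxm: "zx m \<in> mats q q {..<k}" for m using xq unfolding mats_def zx_def by auto
  have zym: "zy m \<in> mats q q {..<k}" for m using yq unfolding mats_def zy_def by auto
  have zxn: "N1 q (zx m) \<le> N1 q x" if "m < M" for m
    unfolding zx_def by (rule uncond_app[OF u1 _ xq]) (use g that in auto)
  have zyn: "N2 q (zy m) \<le> N2 q y" if "m < M" for m
    unfolding zy_def by (rule uncond_app[OF u2 _ yq]) (use g that in auto)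
  have nx0: "0 \<le> N1 q x" by (rule os_nonneg[OF os1 xq])
  have ny0: "0 \<le> N2 q y" by (rule os_nonneg[OF os2 yq])
  define Dx where "Dx = bd q zx M"
  define Dy where "Dy = bd q zy M"
  have Dxm: "Dx \<in> mats P P {..<k}" unfolding Dx_def P_def by (rule bd_mats) (use zxm q in auto)
  have Dym: "Dy \<in> mats P P {..<k}" unfolding Dy_def P_def by (rule bd_mats) (use zym q in auto)
  have Dxn: "N1 P Dx \<le> N1 q x" unfolding Dx_def P_def by (rule bd_norm[OF os1 q(1)]) (use zxm zxn nx0 in auto)
  have Dyn: "N2 P Dy \<le> N2 q y" unfolding Dy_def P_def by (rule bd_norm[OF os2 q(1)]) (use zym zyn ny0 in auto)
  define Xr where "Xr = (\<lambda>r c b. if r < q \<and> c < P then zx (c div q) r (c mod q) b else 0)"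
  define Yr where "Yr = (\<lambda>s c b. if s < P \<and> c < q then zy (s div q) (s mod q) c b else 0)"
  have Xr_eq: "Xr = mmul P P (alph q P) Dx (Iden P)"
    unfolding Xr_def P_def Dx_def by (rule row_fact[symmetric, OF q(1)]) (use zxm in auto)
  have Yr_eq: "Yr = mmul P P (Iden P) Dy (bet q P)"
    unfolding Yr_def P_def Dy_def by (rule col_fact[symmetric, OF q(1)]) (use zym in auto)
  have sm: "alph q P \<in> smats P P" "bet q P \<in> smats P P" "Iden P \<in> smats P P"
    using smats_abi[OF M, of q P] unfolding P_def by auto
  have an: "opnorm P P (alph q P) \<le> sqrt (real M)" "0 \<le> opnorm P P (alph q P)"
    using alph_norm[OF q(1), of M] unfolding P_def by auto
  have bn: "opnorm P P (bet q P) \<le> sqrt (real M)" "0 \<le> opnorm P P (bet q P)"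
    using bet_norm[OF q(1), of M] unfolding P_def by auto
  have idn: "opnorm P P (Iden P) \<le> 1" "0 \<le> opnorm P P (Iden P)" using Iden_norm[of P] by auto
  have tri: "a * d * b \<le> s * e" if "0 \<le> a" "a \<le> s" "0 \<le> b" "b \<le> 1" "0 \<le> d" "d \<le> e" for a b d s e :: real
  proof -
    have "a * d * b \<le> a * d" using that by (simp add: mult_left_le)
    also have "\<dots> \<le> s * e" using that by (meson mult_mono order_trans)
    finally show ?thesis .
  qed
  have tri2: "b * d * a \<le> s * e" if "0 \<le> a" "a \<le> s" "0 \<le> b" "b \<le> 1" "0 \<le> d" "d \<le> e" for a b d s e :: real
    using tri[OF that] by (simp add: mult.commute mult.left_commute)
  have Xrn: "N1 P Xr \<le> sqrt (real M) * N1 q x"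
  proof -
    have "N1 P Xr \<le> opnorm P P (alph q P) * N1 P Dx * opnorm P P (Iden P)"
      unfolding Xr_eq by (rule os_mmul[OF os1 sm(1) Dxm sm(3)])
    also have "\<dots> \<le> sqrt (real M) * N1 q x"
      by (rule tri) (use an idn Dxn os_nonneg[OF os1 Dxm] in auto)
    finally show ?thesis .
  qed
  have Yrn: "N2 P Yr \<le> sqrt (real M) * N2 q y"
  proof -
    have "N2 P Yr \<le> opnorm P P (Iden P) * N2 P Dy * opnorm P P (bet q P)"
      unfolding Yr_eq by (rule os_mmul[OF os2 sm(3) Dym sm(2)])
    also have "\<dots> \<le> sqrt (real M) * N2 q y"
      by (rule tri2) (use bn idn Dyn os_nonneg[OF os2 Dym] in auto)
    finally show ?thesis .
  qed
  have Xrm: "Xr \<in> mats P P {..<k}" unfolding mats_def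
  proof (intro CollectI allI impI)
    fix r c i assume nz: "Xr r c i \<noteq> 0"
    hence "r < q" "c < P" and "x r (c mod q) i \<noteq> 0" unfolding Xr_def zx_def by (auto split: if_splits)
    hence "r < q" "c < P" "i < k" using xz by blast+
    thus "r < P \<and> c < P \<and> i \<in> {..<k}" using qP by auto
  qed
  have Yrm: "Yr \<in> mats P P {..<k}" unfolding mats_def
  proof (intro CollectI allI impI)
    fix r c i assume nz: "Yr r c i \<noteq> 0"
    hence "r < P" "c < q" and "y (r mod q) c i \<noteq> 0" unfolding Yr_def zy_def by (auto split: if_splits)
    hence "r < P" "c < q" "i < k" using yz by blast+
    thus "r < P \<and> c < P \<and> i \<in> {..<k}" using qP by auto
  qed
  define c0 where "c0 = complex_of_real (1 / sqrt (real M))"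
  define X where "X = (\<lambda>r c b. c0 * Xr r c b)"
  define Y where "Y = (\<lambda>r c b. c0 * Yr r c b)"
  have c0n: "cmod c0 * sqrt (real M) = 1" unfolding c0_def norm_of_real using M by simp
  have c02: "c0 * c0 = 1 / of_nat M" unfolding c0_def using M
    by (simp add: of_real_mult[symmetric] del: of_real_mult)
  have Xn: "N1 P X \<le> N1 q x"
  proof -
    have "N1 P X = cmod c0 * N1 P Xr" unfolding X_def by (rule os_scale[OF os1 Xrm])
    also have "\<dots> \<le> cmod c0 * (sqrt (real M) * N1 q x)" by (rule mult_left_mono[OF Xrn]) simp
    also have "\<dots> = N1 q x" using c0n by (simp add: mult.assoc[symmetric])
    finally show ?thesis .
  qed
  have Yn: "N2 P Y \<le> N2 q y"
  proof -
    have "N2 P Y = cmod c0 * N2 P Yr" unfolding Y_def by (rule os_scale[OF os2 Yrm])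
    also have "\<dots> \<le> cmod c0 * (sqrt (real M) * N2 q y)" by (rule mult_left_mono[OF Yrn]) simp
    also have "\<dots> = N2 q y" using c0n by (simp add: mult.assoc[symmetric])
    finally show ?thesis .
  qed
  have Xm: "X \<in> mats n P {..<k}" unfolding mats_def
  proof (intro CollectI allI impI)
    fix r c i assume nz: "X r c i \<noteq> 0"
    hence "c < P" and "x r (c mod q) i \<noteq> 0" unfolding X_def Xr_def zx_def by (auto split: if_splits)
    thus "r < n \<and> c < P \<and> i \<in> {..<k}" using xz by blast
  qed
  have Ym: "Y \<in> mats P n {..<k}" unfolding mats_def
  proof (intro CollectI allI impI)
    fix r c i assume nz: "Y r c i \<noteq> 0"
    hence "r < P" and "y (r mod q) c i \<noteq> 0" unfolding Y_def Yr_def zy_def by (auto split: if_splits)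
    thus "r < P \<and> c < n \<and> i \<in> {..<k}" using yz by blast
  qed
  have hx: "Xr r s i = complex_of_real (g (s div q) i) * x r (s mod q) i" if "s < P" for r s i
    unfolding Xr_def zx_def using xz[of r "s mod q" i] q that by auto
  have hy: "Yr s c j = complex_of_real (g (s div q) j) * y (s mod q) c j" if "s < P" for s c j
    unfolding Yr_def zy_def using yz[of "s mod q" c j] q that by auto
  have ht: "ampl diagproj (htens p x y) = htens P X Y"
  proof (intro ext)
    fix r c :: nat and ij :: "nat \<times> nat"
    obtain i j where ij: "ij = (i,j)" by (cases ij)
    define T where "T = (\<Sum>t<q. x r t i * y t c j)"
    have Tp: "htens p x y r c (i,j) = T" unfolding htens_def T_def fst_conv snd_conv
      by (rule sum.mono_neutral_left) (use xz q in auto)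
    have "htens P X Y r c (i,j) = (\<Sum>s<M*q. c0 * Xr r s i * (c0 * Yr s c j))"
      unfolding htens_def X_def Y_def P_def by simp
    also have "\<dots> = (\<Sum>m<M. \<Sum>t<q. c0 * Xr r (m*q+t) i * (c0 * Yr (m*q+t) c j))" by (rule sum_split)
    also have "\<dots> = (\<Sum>m<M. \<Sum>t<q. (c0 * c0 * of_real (g m i * g m j)) * (x r t i * y t c j))"
    proof (intro sum.cong refl)
      fix m t assume m: "m \<in> {..<M}" and t: "t \<in> {..<q}"
      have d: "(m*q+t) div q = m" "(m*q+t) mod q = t" using mq[of t q m] t by auto
      have lt: "m*q+t < P" unfolding P_def using m t mult_le_mono1[of "Suc m" M q] by auto
      show "c0 * Xr r (m*q+t) i * (c0 * Yr (m*q+t) c j) = (c0 * c0 * of_real (g m i * g m j)) * (x r t i * y t c j)"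
        unfolding hx[OF lt] hy[OF lt] d by (simp add: mult_ac)
    qed
    also have "\<dots> = (\<Sum>m<M. c0 * c0 * of_real (g m i * g m j) * T)"
      unfolding T_def by (simp only: sum_distrib_left)
    also have "\<dots> = (\<Sum>m<M. c0 * c0 * of_real (g m i * g m j)) * T"
      by (simp only: sum_distrib_right)
    also have "\<dots> = c0 * c0 * of_real (\<Sum>m<M. g m i * g m j) * T"
      by (simp add: sum_distrib_left)
    finally have R: "htens P X Y r c (i,j) = c0 * c0 * of_real (\<Sum>m<M. g m i * g m j) * T" .
    have L: "ampl diagproj (htens p x y) r c (i,j) = (if i = j then T else 0)"
      unfolding ampl_def diagproj_def using Tp by auto
    show "ampl diagproj (htens p x y) r c ij = htens P X Y r c ij"
    proof (cases "T = 0")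
      case True thus ?thesis using L R ij by simp
    next
      case False
      then obtain t where "x r t i * y t c j \<noteq> 0" unfolding T_def
        by (meson sum.not_neutral_contains_not_neutral)
      hence "i < k" "j < k" using xz yz by fastforce+
      hence "(\<Sum>m<M. g m i * g m j) = (if i = j then real M else 0)" by (rule go)
      thus ?thesis using L R ij c02 M by simp
    qed
  qed
  have mx: "max n P = P" "max n p = q" "max P n = P" "max p n = q" using q qP unfolding q_def by auto
  show ?thesis
    by (rule exI[of _ P], rule exI[of _ X], rule exI[of _ Y]) (use Xm Ym ht Xn Yn mx in simp)
qed
lemma mats_sub: "x \<in> mats n p B \<Longrightarrow> n \<le> q \<Longrightarrow> p \<le> q \<Longrightarrow> x \<in> mats q q B"
  unfolding mats_def by (auto intro: less_le_trans)

lemma exfact: assumes u: "u \<in> mats n n ({..<k} \<times> {..<k})"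
  shows "\<exists>p x y. x \<in> mats n p {..<k} \<and> y \<in> mats p n {..<k} \<and> u = htens p x y"
proof (cases "k = 0")
  case True
  have "u = (\<lambda>_ _ _. 0)"
  proof (intro ext)
    fix r c ij show "u r c ij = 0" using u True unfolding mats_def by (cases ij) auto
  qed
  moreover have "htens 0 (\<lambda>_ _ _. 0) (\<lambda>_ _ _. 0) = (\<lambda>_ _ _. 0)" unfolding htens_def by simp
  moreover have "(\<lambda>_ _ _. 0) \<in> mats n 0 {..<k}" "(\<lambda>_ _ _. 0) \<in> mats 0 n {..<k}" unfolding mats_def by auto
  ultimately show ?thesis by metis
next
  case False
  hence k: "0 < k" by simp
  have uz: "u r c (i,j) = 0" if "\<not> (r < n \<and> c < n \<and> i < k \<and> j < k)" for r c i j
    using u that unfolding mats_def by blast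
  define x where "x = (\<lambda>r s i. u r (s div k) (i, s mod k))"
  define y where "y = (\<lambda>s c j. if s < n*k \<and> s div k = c \<and> s mod k = j then (1::complex) else 0)"
  have xm: "x \<in> mats n (n*k) {..<k}" unfolding mats_def
  proof (intro CollectI allI impI)
    fix r s i assume "x r s i \<noteq> 0"
    hence "r < n" "s div k < n" "i < k" using uz unfolding x_def by blast+
    moreover have "s < n*k" using \<open>s div k < n\<close> k by (simp add: div_less_iff_less_mult)
    ultimately show "r < n \<and> s < n*k \<and> i \<in> {..<k}" by simp
  qed
  have ym: "y \<in> mats (n*k) n {..<k}" unfolding mats_def
  proof (intro CollectI allI impI)
    fix s c j assume "y s c j \<noteq> 0"
    hence "s < n*k" "s div k = c" "s mod k = j" unfolding y_def by (auto split: if_splits)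
    thus "s < n*k \<and> c < n \<and> j \<in> {..<k}" using k by (auto simp: div_less_iff_less_mult)
  qed
  have "u = htens (n*k) x y"
  proof (intro ext)
    fix r c :: nat and ij :: "nat \<times> nat"
    obtain i j where ij: "ij = (i,j)" by (cases ij)
    show "u r c ij = htens (n*k) x y r c ij"
    proof (cases "c < n \<and> j < k")
      case True
      define t where "t = c*k + j"
      have tl: "t < n*k" unfolding t_def using True mult_le_mono1[of "Suc c" n k] by auto
      have td: "t div k = c" "t mod k = j" using mq[of j k c] True unfolding t_def by auto
      have "htens (n*k) x y r c ij = (\<Sum>s<n*k. if s = t then u r c (i,j) else 0)"
        unfolding htens_def ij fst_conv snd_conv
      proof (intro sum.cong refl)
        fix s assume "s \<in> {..<n*k}"
        show "x r s i * y s c j = (if s = t then u r c (i,j) else 0)"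
        proof (cases "s = t")
          case True thus ?thesis using td tl unfolding x_def y_def by simp
        next
          case False
          have "\<not> (s div k = c \<and> s mod k = j)"
          proof
            assume "s div k = c \<and> s mod k = j"
            hence "s = t" unfolding t_def by (metis div_mult_mod_eq)
            with False show False by simp
          qed
          thus ?thesis using False unfolding y_def by auto
        qed
      qed
      also have "\<dots> = u r c (i,j)" using sum_delta_if[OF tl] .
      finally show ?thesis using ij by simp
    next
      case False
      have "y s c j = 0" for s
        using False k unfolding y_def by (auto simp: div_less_iff_less_mult)
      hence "htens (n*k) x y r c ij = 0" unfolding htens_def ij by simp
      moreover have "u r c ij = 0" using uz False ij by auto
      ultimately show ?thesis by simp
    qed
  qed
  thus ?thesis using xm ym by blast
qed

theorem lemma5p2:
  fixes N1 N2 :: "nat \<Rightarrow> nat emat \<Rightarrow> real" and k :: nat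
  assumes "opspace N1 {..<k}" and "opspace N2 {..<k}"
    and "compl_1_uncond N1 k" and "compl_1_uncond N2 k"
  shows "completely_contractive (hnorm N1 N2 k) (hnorm N1 N2 k) ({..<k} \<times> {..<k}) diagproj"
  unfolding completely_contractive_def
proof (intro allI ballI)
  fix n and u :: "(nat \<times> nat) emat"
  assume u: "u \<in> mats n n ({..<k} \<times> {..<k})"
  show "hnorm N1 N2 k n (ampl diagproj u) \<le> hnorm N1 N2 k n u"
  proof (cases "n = 0")
    case True
    have "u = (\<lambda>_ _ _. 0)"
    proof (intro ext)
      fix r c ij show "u r c ij = 0" using u True unfolding mats_def by (cases ij) auto
    qed
    moreover have "ampl diagproj (\<lambda>_ _ _. 0) = (\<lambda>_ _ _. 0)"
      unfolding ampl_def diagproj_def by (intro ext) simp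
    ultimately show ?thesis by simp
  next
    case False
    hence n: "0 < n" by simp
    define SS where "SS v = {N1 (max n p) x * N2 (max p n) y | p x y.
      x \<in> mats n p {..<k} \<and> y \<in> mats p n {..<k} \<and> v = htens p x y}" for v
    have hn: "hnorm N1 N2 k n v = Inf (SS v)" for v unfolding hnorm_def SS_def by simp
    have elem: "N1 (max n p) x * N2 (max p n) y \<in> SS v"
      if "x \<in> mats n p {..<k}" "y \<in> mats p n {..<k}" "v = htens p x y" for v p x y
      unfolding SS_def using that by blast
    have nn: "0 \<le> N1 (max n p) x" "0 \<le> N2 (max p n) y"
      if "x \<in> mats n p {..<k}" "y \<in> mats p n {..<k}" for p x y
      using os_nonneg[OF assms(1) mats_sub[OF that(1)]] os_nonneg[OF assms(2) mats_sub[OF that(2)]] by auto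
    have bdd: "bdd_below (SS v)" for v
    proof (rule bdd_belowI[of _ 0])
      fix t assume "t \<in> SS v"
      then obtain p x y where "x \<in> mats n p {..<k}" "y \<in> mats p n {..<k}" "t = N1 (max n p) x * N2 (max p n) y"
        unfolding SS_def by blast
      thus "0 \<le> t" using nn by simp
    qed
    have ne: "SS u \<noteq> {}" using exfact[OF u] elem by blast
    have "Inf (SS (ampl diagproj u)) \<le> Inf (SS u)"
    proof (rule cInf_greatest[OF ne])
      fix t assume "t \<in> SS u"
      then obtain p x y where xy: "x \<in> mats n p {..<k}" "y \<in> mats p n {..<k}" "u = htens p x y"
        and t: "t = N1 (max n p) x * N2 (max p n) y"
        unfolding SS_def by blast
      obtain P X Y where XY: "X \<in> mats n P {..<k}" "Y \<in> mats P n {..<k}"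
        "ampl diagproj (htens p x y) = htens P X Y"
        and XYn: "N1 (max n P) X \<le> N1 (max n p) x" "N2 (max P n) Y \<le> N2 (max p n) y"
        using key[OF assms n xy(1,2)] by blast
      have "Inf (SS (ampl diagproj u)) \<le> N1 (max n P) X * N2 (max P n) Y"
        by (rule cInf_lower[OF elem bdd]) (use XY xy in auto)
      also have "\<dots> \<le> t" unfolding t
        by (rule mult_mono) (use XYn nn[OF XY(1,2)] nn[OF xy(1,2)] in auto)
      finally show "Inf (SS (ampl diagproj u)) \<le> t" .
    qed
    thus ?thesis unfolding hn .
  qed
qed


end
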